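(* Let $Q$ be in the Frobenius normal form described in the context, let $(X_i)_{i\in\mathbb{N}_0}$ be the associated absorbed Markov chain with initial distribution $\pi=(\pi_1,\dots,\pi_k)$ and absorption time $T$, and let $\ell\in\{1,\dots,k\}$. Then for all $n\in\mathbb{N}$: (i) \[ \mathbb{E}_{\pi}\Big[\tfrac{1}{n+1}\#\{m\in\{0,\dots,n\}:X_m\in I_\ell\}\,\Big|\,T>n\Big]=\frac{\sum_{\theta\in\mathcal{P}^{(\ell)}}\pi_{\theta_1}\sum_{r=0}^{n}Q(\underline{\theta^{\ell}},r)\,Q(\overline{\theta^{\ell}},n-r)\mathbf{1}}{(n+1)\sum_{\theta\in\mathcal{P}}\pi_{\theta_1}Q(\theta,n)\mathbf{1}}; \] (ii) for $s\in I_\ell$, with $t(s):=s-\sum_{i=1}^{\ell-1}d_i$ and $e_{t(s)}\in\mathbb{R}^{d_\ell}$ the $t(s)$-th unit vector, \[ \mathbb{E}_{\pi}\Big[\tfrac{1}{n+1}\#\{m\in\{0,\dots,n\}:X_m=s\}\,\Big|\,T>n\Big]=\frac{\sum_{\theta\in\mathcal{P}^{(\ell)}}\pi_{\theta_1}\sum_{r=0}^{n}Q(\underline{\theta^{\ell}},r)\,e_{t(s)}e_{t(s)}^{\top}\,Q(\overline{\theta^{\ell}},n-r)\mathbf{1}}{(n+1)\sum_{\theta\in\mathcal{P}}\pi_{\theta_1}Q(\theta,n)\mathbf{1}}. \]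
   Context: Let $d\ge 2$ and let $P=\begin{pmatrix}1&0\\ R&Q\end{pmatrix}\in\mathbb{R}^{(d+1)\times(d+1)}$ be a stochastic matrix with $R\in\mathbb{R}^{d\times 1}$, $Q\in\mathbb{R}^{d\times d}$, $R,Q\neq0$, where all eigenvalues of $Q$ have modulus $<1$. $(X_i)_{i\in\mathbb{N}_0}$ is the Markov chain on $\{0,\dots,d\}$ with transition matrix $P$ (state $0$ absorbing), initial distribution $\pi$ (row probability vector on $\{1,\dots,d\}$), $T=\min\{i:X_i=0\}$. $\mathbf{1}$ is the all-ones column vector of the appropriate dimension. $Q$ is in Frobenius normal form: block lower triangular with blocks $Q_{ij}\in\mathbb{R}^{d_i\times d_j}$, $i,j\in\{1,\dots,k\}$, $\sum_i d_i=d$, $Q_{ij}=0$ for $j>i$, each diagonal block $Q_{ii}$ eventually positive. $I_j=\{1+\sum_{i=1}^{j-1}d_i,\dots,\sum_{i=1}^{j}d_i\}$, and $\pi=(\pi_1,\dots,\pi_k)$ with $\pi_i\in\mathbb{R}^{1\times d_i}$. An admissible path of length $\kappa=\kappa(\theta)$ is a strictly decreasing sequence $\theta=(\theta_1,\dots,\theta_\kappa)$ in $\{1,\dots,k\}$ with $Q_{\theta_u\theta_{u+1}}\neq 0$ for all $u\in\{1,\dots,\kappa-1\}$; $\mathcal{P}$ is the set of all admissible paths, $\mathcal{P}_{ij}$ those with $\theta_1=i,\theta_\kappa=j$, and $\mathcal{P}^{(\ell)}$ those with $\theta_u=\ell$ for some $u$. For $\kappa\in\mathbb{N}$, $m\in\mathbb{Z}$,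 $\Gamma_\kappa(m)=\{(\eta_1,\dots,\eta_\kappa)\in\mathbb{N}_0^\kappa:\eta_1+\dots+\eta_\kappa=m\}$ (empty if $m<0$). For $\theta\in\mathcal{P}$ and $m\in\mathbb{N}$, $Q(\theta,m)=\sum_{\eta\in\Gamma_\kappa(m+1-\kappa)}Q_{\theta_1\theta_1}^{\eta_1}Q_{\theta_1\theta_2}Q_{\theta_2\theta_2}^{\eta_2}Q_{\theta_2\theta_3}\cdots Q_{\theta_{\kappa-1}\theta_\kappa}Q_{\theta_\kappa\theta_\kappa}^{\eta_\kappa}$, and $Q(\theta,0)=\mathrm{Id}$ if $\theta_1=\theta_\kappa$ (i.e. $\kappa=1$) and $Q(\theta,0)=0$ otherwise. For $\theta\in\mathcal{P}^{(\ell)}$ with $\theta_u=\ell$, $\underline{\theta^\ell}=(\theta_1,\dots,\theta_u)$ and $\overline{\theta^\ell}=(\theta_u,\dots,\theta_\kappa)$. *)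

theory Defs
  imports "HOL-Analysis.Analysis"
begin

text \<open>Matrices are functions nat => nat => real, states of the chain are 0..d,
  the transient states are 1..d (1-based, as in the paper).  Blocks of Q are
  represented embedded in the d x d index range (zero outside I_i x I_j).\<close>

type_synonym rmat = "nat \<Rightarrow> nat \<Rightarrow> real"

definition mmul :: "nat \<Rightarrow> rmat \<Rightarrow> rmat \<Rightarrow> rmat" where
  "mmul d A B = (\<lambda>i j. \<Sum>l\<in>{1..d}. A i l * B l j)"

definition zmat :: rmat where "zmat = (\<lambda>i j. 0)"

definition Iset :: "nat list \<Rightarrow> nat \<Rightarrow> nat set" where
  "Iset ds j = {1 + (\<Sum>i<j-1. ds!i) .. (\<Sum>i<j. ds!i)}"

definition blk :: "rmat \<Rightarrow> nat list \<Rightarrow> nat \<Rightarrow> nat \<Rightarrow> rmat" where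
  "blk P ds i j = (\<lambda>s t. if s \<in> Iset ds i \<and> t \<in> Iset ds j then P s t else 0)"

definition blkId :: "nat list \<Rightarrow> nat \<Rightarrow> rmat" where
  "blkId ds i = (\<lambda>s t. if s \<in> Iset ds i \<and> s = t then 1 else 0)"

fun bpow :: "nat \<Rightarrow> rmat \<Rightarrow> nat list \<Rightarrow> nat \<Rightarrow> nat \<Rightarrow> rmat" where
  "bpow d P ds i 0 = blkId ds i"
| "bpow d P ds i (Suc e) = mmul d (blk P ds i i) (bpow d P ds i e)"

definition admissible :: "rmat \<Rightarrow> nat list \<Rightarrow> nat list \<Rightarrow> bool" where
  "admissible P ds \<theta> \<longleftrightarrow> \<theta> \<noteq> [] \<and> set \<theta> \<subseteq> {1..length ds} \<and> sorted_wrt (>) \<theta> \<and>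
     (\<forall>u. Suc u < length \<theta> \<longrightarrow> blk P ds (\<theta>!u) (\<theta>!Suc u) \<noteq> zmat)"

definition Paths :: "rmat \<Rightarrow> nat list \<Rightarrow> nat list set" where
  "Paths P ds = {\<theta>. admissible P ds \<theta>}"

definition Paths_through :: "rmat \<Rightarrow> nat list \<Rightarrow> nat \<Rightarrow> nat list set" where
  "Paths_through P ds l = {\<theta>\<in>Paths P ds. l \<in> set \<theta>}"

definition Gam :: "nat \<Rightarrow> int \<Rightarrow> nat list set" where
  "Gam \<kappa> m = (if m < 0 then {} else {\<eta>. length \<eta> = \<kappa> \<and> sum_list \<eta> = nat m})"

fun pathprod :: "nat \<Rightarrow> rmat \<Rightarrow> nat list \<Rightarrow> nat list \<Rightarrow> nat list \<Rightarrow> rmat" where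
  "pathprod d P ds [a] [e] = bpow d P ds a e"
| "pathprod d P ds (a # b # \<theta>) (e # \<eta>) =
     mmul d (mmul d (bpow d P ds a e) (blk P ds a b)) (pathprod d P ds (b # \<theta>) \<eta>)"
| "pathprod d P ds _ _ = zmat"

definition Qpath :: "nat \<Rightarrow> rmat \<Rightarrow> nat list \<Rightarrow> nat list \<Rightarrow> nat \<Rightarrow> rmat" where
  "Qpath d P ds \<theta> m =
     (if m = 0 then (if length \<theta> = 1 then blkId ds (hd \<theta>) else zmat)
      else (\<lambda>s t. \<Sum>\<eta>\<in>Gam (length \<theta>) (int m + 1 - int (length \<theta>)).
                          pathprod d P ds \<theta> \<eta> s t))"

definition lowpart :: "nat list \<Rightarrow> nat \<Rightarrow> nat list" where
  "lowpart \<theta> l = takeWhile (\<lambda>x. x \<noteq> l) \<theta> @ [l]"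

definition uppart :: "nat list \<Rightarrow> nat \<Rightarrow> nat list" where
  "uppart \<theta> l = dropWhile (\<lambda>x. x \<noteq> l) \<theta>"

text \<open>Law of the chain (X_0,...,X_n) on {0..d}: initial distribution pi (on 1..d,
  extended by 0 at the absorbing state 0), transition matrix P.\<close>
definition pathprob :: "rmat \<Rightarrow> (nat \<Rightarrow> real) \<Rightarrow> nat list \<Rightarrow> real" where
  "pathprob P \<pi> xs = (if xs ! 0 = 0 then 0 else \<pi> (xs ! 0)) *
                      (\<Prod>i<length xs - 1. P (xs ! i) (xs ! Suc i))"

definition trajectories :: "nat \<Rightarrow> nat \<Rightarrow> nat list set" where
  "trajectories d n = {xs. length xs = Suc n \<and> set xs \<subseteq> {0..d}}"

text \<open>T > n  iff  X_0,...,X_n are all nonzero (T = first hitting time of 0).\<close>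
definition Tgt :: "nat \<Rightarrow> nat list \<Rightarrow> bool" where
  "Tgt n xs \<longleftrightarrow> (\<forall>m\<le>n. xs ! m \<noteq> 0)"

definition cond_exp :: "nat \<Rightarrow> rmat \<Rightarrow> (nat \<Rightarrow> real) \<Rightarrow> nat \<Rightarrow> (nat list \<Rightarrow> real) \<Rightarrow> real" where
  "cond_exp d P \<pi> n Y =
     (\<Sum>xs\<in>{xs\<in>trajectories d n. Tgt n xs}. pathprob P \<pi> xs * Y xs) /
     (\<Sum>xs\<in>{xs\<in>trajectories d n. Tgt n xs}. pathprob P \<pi> xs)"

end

theory Submission
  imports Defs
begin

definition cs :: "nat list \<Rightarrow> nat \<Rightarrow> nat" where "cs ds j = (\<Sum>i<j. ds!i)"

lemma Iset_cs: "Iset ds j = {1 + cs ds (j-1) .. cs ds j}"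
  by (simp add: Iset_def cs_def)

lemma cs_mono: "i \<le> j \<Longrightarrow> cs ds i \<le> cs ds j"
  unfolding cs_def by (rule sum_mono2) auto

lemma cs_len: "cs ds (length ds) = sum_list ds"
  by (simp add: cs_def sum_list_sum_nth atLeast0LessThan)

lemma Iset_sub: "j \<le> length ds \<Longrightarrow> Iset ds j \<subseteq> {1..sum_list ds}"
  using cs_mono[of j "length ds" ds] by (auto simp: Iset_cs cs_len)

lemma Iset_disj: "i \<noteq> j \<Longrightarrow> x \<in> Iset ds i \<Longrightarrow> x \<in> Iset ds j \<Longrightarrow> False"
proof -
  have *: "i < j \<Longrightarrow> x \<in> Iset ds i \<Longrightarrow> x \<in> Iset ds j \<Longrightarrow> False" for i j
    using cs_mono[of i "j-1" ds] by (auto simp: Iset_cs) linarith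
  show "i \<noteq> j \<Longrightarrow> x \<in> Iset ds i \<Longrightarrow> x \<in> Iset ds j \<Longrightarrow> False"
    using *[of i j] *[of j i] by linarith
qed

lemma Iset_ex: assumes "u \<in> {1..sum_list ds}" shows "\<exists>j\<in>{1..length ds}. u \<in> Iset ds j"
proof -
  define j where "j = (LEAST j. u \<le> cs ds j)"
  have ex: "u \<le> cs ds (length ds)" using assms by (simp add: cs_len)
  have 1: "u \<le> cs ds j" unfolding j_def by (rule LeastI[of _ "length ds"]) (rule ex)
  have 2: "j \<le> length ds" unfolding j_def by (rule Least_le) (rule ex)
  have 3: "j \<noteq> 0" using 1 assms by (auto simp: cs_def intro!: Nat.gr0I)
  have 4: "\<not> u \<le> cs ds (j-1)" unfolding j_def
    by (rule not_less_Least) (use 3 in \<open>simp add: j_def\<close>)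
  show ?thesis using 1 2 3 4 by (auto simp: Iset_cs intro!: bexI[of _ j])
qed

lemma Iset0: "Iset ds 0 = {}" by (simp add: Iset_def)

lemma mmul_assoc: "mmul d (mmul d A B) C = mmul d A (mmul d B C)"
proof (intro ext)
  fix s t
  show "mmul d (mmul d A B) C s t = mmul d A (mmul d B C) s t"
    unfolding mmul_def sum_distrib_left sum_distrib_right
    by (subst sum.swap) (simp add: mult.assoc)
qed

lemma mmul_zmat[simp]: "mmul d A zmat = zmat" "mmul d zmat A = zmat"
  by (auto simp: mmul_def zmat_def fun_eq_iff)

lemma mmul_sum_right: "finite X \<Longrightarrow> mmul d A (\<lambda>s t. \<Sum>x\<in>X. F x s t) s t = (\<Sum>x\<in>X. mmul d A (F x) s t)"
  unfolding mmul_def sum_distrib_left by (rule sum.swap)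

lemma mmul_sum_left: "finite X \<Longrightarrow> mmul d (\<lambda>s t. \<Sum>x\<in>X. F x s t) A s t = (\<Sum>x\<in>X. mmul d (F x) A s t)"
  unfolding mmul_def sum_distrib_right by (rule sum.swap)

lemma mmul_nz: "mmul d A B s t \<noteq> 0 \<Longrightarrow> \<exists>l. A s l \<noteq> 0 \<and> B l t \<noteq> 0"
proof (rule ccontr)
  assume a: "mmul d A B s t \<noteq> 0" and "\<not> (\<exists>l. A s l \<noteq> 0 \<and> B l t \<noteq> 0)"
  hence "\<forall>l. A s l * B l t = 0" by auto
  hence "mmul d A B s t = 0" unfolding mmul_def by (intro sum.neutral) auto
  with a show False by simp
qed

definition supp :: "nat list \<Rightarrow> rmat \<Rightarrow> nat \<Rightarrow> nat \<Rightarrow> bool" where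
  "supp ds A a b \<longleftrightarrow> (\<forall>s t. A s t \<noteq> 0 \<longrightarrow> s \<in> Iset ds a \<and> t \<in> Iset ds b)"

lemma supp_mmul: "supp ds A a b \<Longrightarrow> supp ds B b' c \<Longrightarrow> supp ds (mmul d A B) a c"
  unfolding supp_def by (metis mmul_nz)

lemma supp_zmat: "supp ds zmat a b" by (simp add: supp_def zmat_def)
lemma supp_blk: "supp ds (blk P ds a b) a b" by (simp add: supp_def blk_def)
lemma supp_blkId: "supp ds (blkId ds a) a a" by (simp add: supp_def blkId_def)
lemma supp_bpow: "supp ds (bpow d P ds a e) a a"
  by (induction e) (auto simp: supp_blkId intro: supp_mmul supp_blk)

lemma supp_pathprod: "\<theta> \<noteq> [] \<Longrightarrow> supp ds (pathprod d P ds \<theta> \<eta>) (hd \<theta>) (last \<theta>)"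
  by (induction d P ds \<theta> \<eta> rule: pathprod.induct)
     (auto simp: supp_zmat supp_bpow intro!: supp_mmul[OF supp_mmul[OF supp_bpow supp_blk]])

lemma mmul_blkId_left:
  assumes "a \<le> length ds" "sum_list ds = d"
  shows "mmul d (blkId ds a) B s t = (if s \<in> Iset ds a then B s t else 0)"
proof -
  have sub: "Iset ds a \<subseteq> {1..d}" using Iset_sub[OF assms(1)] assms(2) by simp
  have "mmul d (blkId ds a) B s t = (\<Sum>l\<in>{1..d}. if l = s then (if s \<in> Iset ds a then B s t else 0) else 0)"
    unfolding mmul_def blkId_def by (intro sum.cong) auto
  also have "\<dots> = (if s \<in> Iset ds a then B s t else 0)"
    using sub by (auto simp: sum.delta)
  finally show ?thesis .
qed

lemma mmul_blkId_blk:
  assumes "a \<le> length ds" "sum_list ds = d"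
  shows "mmul d (blkId ds a) (blk P ds a b) = blk P ds a b"
  using mmul_blkId_left[OF assms] by (auto simp: blk_def fun_eq_iff)

fun adm :: "rmat \<Rightarrow> nat list \<Rightarrow> nat list \<Rightarrow> bool" where
  "adm P ds [] = False"
| "adm P ds [a] = (a \<in> {1..length ds})"
| "adm P ds (a#b#\<theta>) = (a \<in> {1..length ds} \<and> b < a \<and> blk P ds a b \<noteq> zmat \<and> adm P ds (b#\<theta>))"

lemma adm_lt: "adm P ds (a#\<theta>) \<Longrightarrow> \<forall>y\<in>set \<theta>. y < a"
  by (induction \<theta> arbitrary: a) fastforce+

lemma adm_set: "adm P ds \<theta> \<Longrightarrow> set \<theta> \<subseteq> {1..length ds}"
  by (induction P ds \<theta> rule: adm.induct) auto

lemma adm_distinct: "adm P ds \<theta> \<Longrightarrow> distinct \<theta>"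
  by (induction P ds \<theta> rule: adm.induct) (use adm_lt in fastforce)+

lemma all_Suc_split: "(\<forall>u::nat. Q u) = (Q 0 \<and> (\<forall>u. Q (Suc u)))"
  by (metis not0_implies_Suc)

lemma admissible_adm: "admissible P ds \<theta> \<longleftrightarrow> adm P ds \<theta>"
proof (induction P ds \<theta> rule: adm.induct)
  case (1 P ds) then show ?case by (simp add: admissible_def)
next
  case (2 P ds a) then show ?case by (simp add: admissible_def)
next
  case (3 P ds a b \<theta>)
  have "admissible P ds (a#b#\<theta>) \<longleftrightarrow> a \<in> {1..length ds} \<and> b < a \<and> blk P ds a b \<noteq> zmat \<and> admissible P ds (b#\<theta>)"
    unfolding admissible_def
    apply (subst all_Suc_split)
    apply auto
    done
  with 3 show ?case by simp
qed

lemma Paths_adm: "Paths P ds = {\<theta>. adm P ds \<theta>}"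
  by (simp add: Paths_def admissible_adm)

lemma finite_Paths: "finite (Paths P ds)"
proof -
  have "Paths P ds \<subseteq> {xs. set xs \<subseteq> {1..length ds} \<and> length xs \<le> length ds}"
  proof
    fix \<theta> assume "\<theta> \<in> Paths P ds"
    hence a: "adm P ds \<theta>" by (simp add: Paths_adm)
    have "length \<theta> = card (set \<theta>)" using adm_distinct[OF a] by (simp add: distinct_card)
    also have "\<dots> \<le> card {1..length ds}" by (rule card_mono) (use adm_set[OF a] in auto)
    finally show "\<theta> \<in> {xs. set xs \<subseteq> {1..length ds} \<and> length xs \<le> length ds}"
      using adm_set[OF a] by simp
  qed
  moreover have "finite {xs. set xs \<subseteq> {1..length ds} \<and> length xs \<le> length ds}"
    by (rule finite_lists_length_le) simp
  ultimately show ?thesis by (rule finite_subset)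
qed

lemma mem_Gam: "\<eta> \<in> Gam \<kappa> N \<longleftrightarrow> N \<ge> 0 \<and> length \<eta> = \<kappa> \<and> sum_list \<eta> = nat N"
  by (auto simp: Gam_def)

lemma finite_Gam: "finite (Gam \<kappa> N)"
proof -
  have "Gam \<kappa> N \<subseteq> {xs. set xs \<subseteq> {0..nat N} \<and> length xs = \<kappa>}"
    by (auto simp: mem_Gam dest: member_le_sum_list)
  moreover have "finite {xs. set xs \<subseteq> {0..nat N} \<and> length xs = \<kappa>}"
    by (rule finite_lists_length_eq) simp
  ultimately show ?thesis by (rule finite_subset)
qed

definition QG :: "nat \<Rightarrow> rmat \<Rightarrow> nat list \<Rightarrow> nat list \<Rightarrow> nat \<Rightarrow> rmat" where
  "QG d P ds \<theta> m = (\<lambda>s t. \<Sum>\<eta>\<in>Gam (length \<theta>) (int m + 1 - int (length \<theta>)). pathprod d P ds \<theta> \<eta> s t)"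

lemma Gam1: "N \<ge> 0 \<Longrightarrow> Gam 1 N = {[nat N]}"
  by (auto simp: mem_Gam length_Suc_conv)

lemma Gam_neg: "N < 0 \<Longrightarrow> Gam k N = {}"
  by (auto simp: mem_Gam)

lemma Gam1': "Gam (Suc 0) (int m) = {[m]}"
  using Gam1[of "int m"] by simp

lemma QG_single: "QG d P ds [a] m = bpow d P ds a m"
  by (simp add: QG_def Gam1' fun_eq_iff)

lemma Qpath_QG: "\<theta> \<noteq> [] \<Longrightarrow> Qpath d P ds \<theta> m = QG d P ds \<theta> m"
proof (cases "m = 0")
  case True
  assume ne: "\<theta> \<noteq> []"
  show ?thesis
  proof (cases "length \<theta> = 1")
    case True
    then obtain a where "\<theta> = [a]" by (auto simp: length_Suc_conv)
    then show ?thesis using \<open>m = 0\<close> by (simp add: Qpath_def QG_single)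
  next
    case False
    hence "length \<theta> \<ge> 2" using ne by (cases \<theta>) (auto simp: Suc_le_eq)
    then show ?thesis using \<open>m = 0\<close> False
      by (simp add: Qpath_def QG_def Gam_neg zmat_def fun_eq_iff)
  qed
next
  case False
  then show ?thesis by (simp add: Qpath_def QG_def)
qed

lemma supp_QG: "\<theta> \<noteq> [] \<Longrightarrow> supp ds (QG d P ds \<theta> m) (hd \<theta>) (last \<theta>)"
  unfolding supp_def QG_def
proof (intro allI impI)
  fix s t assume ne: "\<theta> \<noteq> []" and "(\<Sum>\<eta>\<in>Gam (length \<theta>) (int m + 1 - int (length \<theta>)). pathprod d P ds \<theta> \<eta> s t) \<noteq> 0"
  then obtain \<eta> where "pathprod d P ds \<theta> \<eta> s t \<noteq> 0" by (meson sum.not_neutral_contains_not_neutral)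
  with supp_pathprod[OF ne] show "s \<in> Iset ds (hd \<theta>) \<and> t \<in> Iset ds (last \<theta>)"
    unfolding supp_def by blast
qed

lemma pathprod_Suc: "pathprod d P ds (a#b#\<theta>) (Suc e # \<eta>) = mmul d (blk P ds a a) (pathprod d P ds (a#b#\<theta>) (e#\<eta>))"
  by (simp add: mmul_assoc)

lemma pathprod_0:
  assumes "a \<le> length ds" "sum_list ds = d"
  shows "pathprod d P ds (a#b#\<theta>) (0 # \<eta>) = mmul d (blk P ds a b) (pathprod d P ds (b#\<theta>) \<eta>)"
  by (simp add: mmul_blkId_blk[OF assms])

lemma QG_rec:
  assumes a: "a \<le> length ds" and dsd: "sum_list ds = d"
  shows "QG d P ds (a#b#\<theta>) (Suc m) s t = mmul d (blk P ds a a) (QG d P ds (a#b#\<theta>) m) s t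
           + mmul d (blk P ds a b) (QG d P ds (b#\<theta>) m) s t"
proof -
  define K where "K = Suc (length \<theta>)"
  define N where "N = int (Suc m) + 1 - int (Suc K)"
  define f where "f \<eta> = pathprod d P ds (a#b#\<theta>) \<eta> s t" for \<eta>
  have QL: "QG d P ds (a#b#\<theta>) (Suc m) s t = sum f (Gam (Suc K) N)"
    by (simp add: QG_def f_def K_def N_def)
  have "sum f (Gam (Suc K) N) = sum f (Gam (Suc K) N \<inter> {\<eta>. hd \<eta> = 0}) + sum f (Gam (Suc K) N - {\<eta>. hd \<eta> = 0})"
    by (rule sum.Int_Diff) (rule finite_Gam)
  also have "sum f (Gam (Suc K) N \<inter> {\<eta>. hd \<eta> = 0}) = (\<Sum>\<eta>\<in>Gam K N. f (0#\<eta>))"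
    by (rule sum.reindex_bij_witness[where i="Cons 0" and j=tl]) (auto simp: mem_Gam length_Suc_conv)
  also have "sum f (Gam (Suc K) N - {\<eta>. hd \<eta> = 0}) = (\<Sum>\<eta>\<in>Gam (Suc K) (N-1). f (Suc (hd \<eta>) # tl \<eta>))"
    by (rule sum.reindex_bij_witness[where i="\<lambda>\<eta>. Suc (hd \<eta>) # tl \<eta>" and j="\<lambda>\<eta>. (hd \<eta> - 1) # tl \<eta>"])
       (auto simp: mem_Gam length_Suc_conv)
  also have "(\<Sum>\<eta>\<in>Gam K N. f (0#\<eta>)) = (\<Sum>\<eta>\<in>Gam K N. mmul d (blk P ds a b) (pathprod d P ds (b#\<theta>) \<eta>) s t)"
    by (simp add: f_def mmul_blkId_blk[OF a dsd])
  also have "\<dots> = mmul d (blk P ds a b) (QG d P ds (b#\<theta>) m) s t"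
    by (simp add: mmul_sum_right[OF finite_Gam] QG_def K_def N_def)
  also have "(\<Sum>\<eta>\<in>Gam (Suc K) (N-1). f (Suc (hd \<eta>) # tl \<eta>))
       = (\<Sum>\<eta>\<in>Gam (Suc K) (N-1). mmul d (blk P ds a a) (pathprod d P ds (a#b#\<theta>) \<eta>) s t)"
  proof (rule sum.cong)
    fix \<eta> assume "\<eta> \<in> Gam (Suc K) (N-1)"
    then obtain e r where "\<eta> = e # r" by (auto simp: mem_Gam length_Suc_conv)
    then show "f (Suc (hd \<eta>) # tl \<eta>) = mmul d (blk P ds a a) (pathprod d P ds (a#b#\<theta>) \<eta>) s t"
      by (simp add: f_def mmul_assoc)
  qed simp
  also have "\<dots> = mmul d (blk P ds a a) (QG d P ds (a#b#\<theta>) m) s t"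
    by (simp add: mmul_sum_right[OF finite_Gam] QG_def K_def N_def)
  finally show ?thesis using QL by simp
qed

fun mpow :: "nat \<Rightarrow> rmat \<Rightarrow> nat \<Rightarrow> rmat" where
  "mpow d A 0 = (\<lambda>i j. if i = j then 1 else 0)"
| "mpow d A (Suc m) = mmul d A (mpow d A m)"

lemma QG_0: "\<theta> \<noteq> [] \<Longrightarrow> QG d P ds \<theta> 0 = (if length \<theta> = 1 then blkId ds (hd \<theta>) else zmat)"
  by (simp add: Qpath_QG[symmetric] Qpath_def)

lemma supp_QG_row: "\<theta> \<noteq> [] \<Longrightarrow> QG d P ds \<theta> m s t \<noteq> 0 \<Longrightarrow> s \<in> Iset ds (hd \<theta>)"
  using supp_QG unfolding supp_def by blast
lemma supp_QG_col: "\<theta> \<noteq> [] \<Longrightarrow> QG d P ds \<theta> m s t \<noteq> 0 \<Longrightarrow> t \<in> Iset ds (last \<theta>)"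
  using supp_QG unfolding supp_def by blast

lemma mmul_blk_other: "s \<in> Iset ds i \<Longrightarrow> a \<noteq> i \<Longrightarrow> mmul d (blk P ds a b) B s t = 0"
  unfolding mmul_def blk_def by (auto intro!: sum.neutral dest: Iset_disj)

lemma adm_hd: "adm P ds (a#r) \<Longrightarrow> a \<in> {1..length ds}"
  by (cases r) auto

lemma adm_app: "adm P ds (xs @ [l]) \<Longrightarrow> adm P ds (l # ys) \<Longrightarrow> adm P ds (xs @ l # ys)"
proof (induction xs)
  case Nil then show ?case by simp
next
  case (Cons a xs) then show ?case by (cases xs) auto
qed

lemma adm_app_D: "adm P ds (xs @ l # ys) \<Longrightarrow> adm P ds (xs @ [l]) \<and> adm P ds (l # ys)"
proof (induction xs)
  case Nil then show ?case by (auto dest: adm_hd)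
next
  case (Cons a xs) then show ?case by (cases xs) (auto dest: adm_hd)
qed

lemma low_app: "l \<notin> set xs \<Longrightarrow> lowpart (xs @ l # ys) l = xs @ [l]"
  unfolding lowpart_def by (induction xs) auto

lemma up_app: "l \<notin> set xs \<Longrightarrow> uppart (xs @ l # ys) l = l # ys"
  unfolding uppart_def by (induction xs) auto

lemma PT_decomp:
  assumes "\<theta> \<in> Paths_through P ds l"
  obtains xs ys where "\<theta> = xs @ l # ys" "l \<notin> set xs" "adm P ds (xs @ [l])" "adm P ds (l # ys)"
    "lowpart \<theta> l = xs @ [l]" "uppart \<theta> l = l # ys"
proof -
  have a: "adm P ds \<theta>" "l \<in> set \<theta>" using assms by (auto simp: Paths_through_def Paths_adm)
  obtain xs ys where "\<theta> = xs @ l # ys" "l \<notin> set xs" using split_list_first[OF a(2)] by blast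
  with adm_app_D[of P ds xs l ys] a(1) low_app up_app that show ?thesis by auto
qed

lemma sum_PT:
  "(\<Sum>\<theta>\<in>Paths_through P ds l. F (lowpart \<theta> l) (uppart \<theta> l))
   = (\<Sum>\<alpha>\<in>{\<alpha>\<in>Paths P ds. last \<alpha> = l}. \<Sum>\<beta>\<in>{\<beta>\<in>Paths P ds. hd \<beta> = l}. F \<alpha> \<beta>)"
proof -
  have "(\<Sum>\<theta>\<in>Paths_through P ds l. F (lowpart \<theta> l) (uppart \<theta> l))
     = (\<Sum>p\<in>{\<alpha>\<in>Paths P ds. last \<alpha> = l} \<times> {\<beta>\<in>Paths P ds. hd \<beta> = l}. F (fst p) (snd p))"
  proof (rule sum.reindex_bij_witness[where i="\<lambda>p. butlast (fst p) @ snd p" and j="\<lambda>\<theta>. (lowpart \<theta> l, uppart \<theta> l)"])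
    fix \<theta> assume th: "\<theta> \<in> Paths_through P ds l"
    then obtain xs ys where d: "\<theta> = xs @ l # ys" "l \<notin> set xs" "adm P ds (xs @ [l])" "adm P ds (l # ys)"
      "lowpart \<theta> l = xs @ [l]" "uppart \<theta> l = l # ys" by (rule PT_decomp)
    show "butlast (fst (lowpart \<theta> l, uppart \<theta> l)) @ snd (lowpart \<theta> l, uppart \<theta> l) = \<theta>"
      using d by simp
    show "(lowpart \<theta> l, uppart \<theta> l) \<in> {\<alpha>\<in>Paths P ds. last \<alpha> = l} \<times> {\<beta>\<in>Paths P ds. hd \<beta> = l}"
      using d by (simp add: Paths_adm)
  next
    fix p assume p: "p \<in> {\<alpha>\<in>Paths P ds. last \<alpha> = l} \<times> {\<beta>\<in>Paths P ds. hd \<beta> = l}"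
    then obtain \<alpha> \<beta> where pe: "p = (\<alpha>, \<beta>)" "adm P ds \<alpha>" "last \<alpha> = l" "adm P ds \<beta>" "hd \<beta> = l"
      by (auto simp: Paths_adm)
    have "\<alpha> \<noteq> []" "\<beta> \<noteq> []" using pe by auto
    then obtain xs ys where e: "\<alpha> = xs @ [l]" "\<beta> = l # ys"
      using pe by (metis append_butlast_last_id list.collapse)
    have nl: "l \<notin> set xs" using adm_distinct[OF pe(2)] e by simp
    have ad: "adm P ds (xs @ l # ys)" using adm_app[of P ds xs l ys] pe e by simp
    show "(lowpart (butlast (fst p) @ snd p) l, uppart (butlast (fst p) @ snd p) l) = p"
      using pe e nl by (simp add: low_app up_app)
    show "butlast (fst p) @ snd p \<in> Paths_through P ds l"
      using pe e ad by (simp add: Paths_through_def Paths_adm)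
  qed simp
  also have "\<dots> = (\<Sum>\<alpha>\<in>{\<alpha>\<in>Paths P ds. last \<alpha> = l}. \<Sum>\<beta>\<in>{\<beta>\<in>Paths P ds. hd \<beta> = l}. F \<alpha> \<beta>)"
    by (simp add: sum.cartesian_product split_def)
  finally show ?thesis .
qed

lemma sum_lists_Suc:
  assumes "finite A"
  shows "(\<Sum>xs\<in>{xs. length xs = Suc n \<and> set xs \<subseteq> A}. f xs)
       = (\<Sum>y\<in>A. \<Sum>ys\<in>{ys. length ys = n \<and> set ys \<subseteq> A}. f (y#ys))"
proof -
  have "(\<Sum>xs\<in>{xs. length xs = Suc n \<and> set xs \<subseteq> A}. f xs)
       = (\<Sum>p\<in>A \<times> {ys. length ys = n \<and> set ys \<subseteq> A}. f (fst p # snd p))"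
    by (rule sum.reindex_bij_witness[where i="\<lambda>p. fst p # snd p" and j="\<lambda>xs. (hd xs, tl xs)"])
       (auto simp: length_Suc_conv)
  also have "\<dots> = (\<Sum>y\<in>A. \<Sum>ys\<in>{ys. length ys = n \<and> set ys \<subseteq> A}. f (y#ys))"
    by (simp add: sum.cartesian_product split_def)
  finally show ?thesis .
qed

definition ch :: "rmat \<Rightarrow> nat list \<Rightarrow> nat \<Rightarrow> real" where
  "ch P xs n = (\<Prod>i<n. P (xs!i) (xs!Suc i))"

lemma ch_Suc: "ch P (x#y#ys) (Suc n) = P x y * ch P (y#ys) n"
  unfolding ch_def by (subst prod.lessThan_Suc_shift) simp

abbreviation "LL d n \<equiv> {ys. length ys = n \<and> set ys \<subseteq> {1..d}}"

lemma C1: "x \<in> {1..d} \<Longrightarrow> (\<Sum>ys\<in>LL d n. ch P (x#ys) n) = (\<Sum>t\<in>{1..d}. mpow d P n x t)"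
proof (induction n arbitrary: x)
  case 0
  have "LL d 0 = {[]}" by auto
  then show ?case using 0 by (simp add: ch_def)
next
  case (Suc n)
  have "(\<Sum>ys\<in>LL d (Suc n). ch P (x#ys) (Suc n)) = (\<Sum>y\<in>{1..d}. \<Sum>ys\<in>LL d n. ch P (x#y#ys) (Suc n))"
    by (rule sum_lists_Suc) simp
  also have "\<dots> = (\<Sum>y\<in>{1..d}. P x y * (\<Sum>ys\<in>LL d n. ch P (y#ys) n))"
    by (simp add: ch_Suc sum_distrib_left)
  also have "\<dots> = (\<Sum>y\<in>{1..d}. P x y * (\<Sum>t\<in>{1..d}. mpow d P n y t))"
    using Suc.IH by simp
  also have "\<dots> = (\<Sum>y\<in>{1..d}. \<Sum>t\<in>{1..d}. P x y * mpow d P n y t)"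
    by (simp add: sum_distrib_left)
  also have "\<dots> = (\<Sum>t\<in>{1..d}. \<Sum>y\<in>{1..d}. P x y * mpow d P n y t)"
    by (rule sum.swap)
  also have "\<dots> = (\<Sum>t\<in>{1..d}. mpow d P (Suc n) x t)"
    by (simp add: mmul_def)
  finally show ?case .
qed

lemma C2: "x \<in> {1..d} \<Longrightarrow> m \<le> n \<Longrightarrow> (\<Sum>ys\<in>LL d n. ch P (x#ys) n * h ((x#ys)!m))
   = (\<Sum>u\<in>{1..d}. mpow d P m x u * h u * (\<Sum>t\<in>{1..d}. mpow d P (n-m) u t))"
proof (induction m arbitrary: n x)
  case 0
  have "(\<Sum>ys\<in>LL d n. ch P (x#ys) n * h ((x#ys)!0)) = h x * (\<Sum>ys\<in>LL d n. ch P (x#ys) n)"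
    by (simp add: sum_distrib_left mult.commute)
  also have "\<dots> = h x * (\<Sum>t\<in>{1..d}. mpow d P n x t)" using C1[OF 0(1)] by simp
  also have "\<dots> = (\<Sum>u\<in>{1..d}. mpow d P 0 x u * h u * (\<Sum>t\<in>{1..d}. mpow d P (n-0) u t))"
  proof -
    have "(\<Sum>u\<in>{1..d}. mpow d P 0 x u * h u * (\<Sum>t\<in>{1..d}. mpow d P (n-0) u t))
        = (\<Sum>u\<in>{1..d}. if u = x then h u * (\<Sum>t\<in>{1..d}. mpow d P n u t) else 0)"
      by (intro sum.cong refl) auto
    also have "\<dots> = h x * (\<Sum>t\<in>{1..d}. mpow d P n x t)" using 0(1) by (simp add: sum.delta)
    finally show ?thesis by simp
  qed
  finally show ?case .
next
  case (Suc m)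
  then obtain n' where n: "n = Suc n'" "m \<le> n'" by (cases n) auto
  define S where "S u = h u * (\<Sum>t\<in>{1..d}. mpow d P (n'-m) u t)" for u
  have "(\<Sum>ys\<in>LL d n. ch P (x#ys) n * h ((x#ys)!Suc m))
      = (\<Sum>y\<in>{1..d}. \<Sum>ys\<in>LL d n'. ch P (x#y#ys) (Suc n') * h ((x#y#ys)!Suc m))"
    unfolding n by (rule sum_lists_Suc) simp
  also have "\<dots> = (\<Sum>y\<in>{1..d}. P x y * (\<Sum>ys\<in>LL d n'. ch P (y#ys) n' * h ((y#ys)!m)))"
    by (simp add: ch_Suc sum_distrib_left mult.assoc)
  also have "\<dots> = (\<Sum>y\<in>{1..d}. P x y * (\<Sum>u\<in>{1..d}. mpow d P m y u * S u))"
    using Suc.IH n(2) by (simp add: S_def mult.assoc)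
  also have "\<dots> = (\<Sum>y\<in>{1..d}. \<Sum>u\<in>{1..d}. P x y * mpow d P m y u * S u)"
    by (simp add: sum_distrib_left mult.assoc)
  also have "\<dots> = (\<Sum>u\<in>{1..d}. \<Sum>y\<in>{1..d}. P x y * mpow d P m y u * S u)"
    by (rule sum.swap)
  also have "\<dots> = (\<Sum>u\<in>{1..d}. mpow d P (Suc m) x u * S u)"
    by (simp add: mmul_def sum_distrib_right)
  finally show ?case using n by (simp add: S_def mult.assoc)
qed

lemma TT_eq: "{xs\<in>trajectories d n. Tgt n xs} = LL d (Suc n)"
proof (rule set_eqI)
  fix xs
  show "xs \<in> {xs\<in>trajectories d n. Tgt n xs} \<longleftrightarrow> xs \<in> LL d (Suc n)"
  proof
    assume a: "xs \<in> {xs\<in>trajectories d n. Tgt n xs}"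
    have "x \<in> {1..d}" if "x \<in> set xs" for x
    proof -
      obtain i where i: "i < length xs" "x = xs ! i" using \<open>x \<in> set xs\<close> by (auto simp: in_set_conv_nth)
      have "x \<noteq> 0" using a i by (auto simp: trajectories_def Tgt_def)
      moreover have "x \<le> d" using a that by (auto simp: trajectories_def)
      ultimately show ?thesis by simp
    qed
    then show "xs \<in> LL d (Suc n)" using a by (auto simp: trajectories_def)
  next
    assume a: "xs \<in> LL d (Suc n)"
    have "xs ! m \<noteq> 0" if "m \<le> n" for m
    proof -
      have "xs ! m \<in> set xs" using a that by simp
      then show ?thesis using a by auto
    qed
    then show "xs \<in> {xs\<in>trajectories d n. Tgt n xs}" using a by (auto simp: trajectories_def Tgt_def)
  qed
qed

lemma pathprob_Cons: "x \<noteq> 0 \<Longrightarrow> length ys = n \<Longrightarrow> pathprob P \<pi> (x#ys) = \<pi> x * ch P (x#ys) n"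
  by (simp add: pathprob_def ch_def)

lemma card_sum: "finite A \<Longrightarrow> real (card {m\<in>A. Q m}) = (\<Sum>m\<in>A. if Q m then 1 else 0)"
  by (simp add: sum.inter_filter[symmetric])

lemma num_markov:
  "(\<Sum>xs\<in>{xs\<in>trajectories d n. Tgt n xs}. pathprob P \<pi> xs * (real (card {m\<in>{0..n}. S (xs!m)}) / (real n + 1)))
   = (\<Sum>r=0..n. \<Sum>x\<in>{1..d}. \<pi> x * (\<Sum>u\<in>{1..d}. mpow d P r x u * (if S u then 1 else 0) * (\<Sum>t\<in>{1..d}. mpow d P (n-r) u t))) / (real n + 1)"
proof -
  define h where "h u = (if S u then 1 else (0::real))" for u
  have "(\<Sum>xs\<in>LL d (Suc n). pathprob P \<pi> xs * (real (card {m\<in>{0..n}. S (xs!m)}) / (real n + 1)))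
      = (\<Sum>xs\<in>LL d (Suc n). \<Sum>m=0..n. pathprob P \<pi> xs * h (xs!m)) / (real n + 1)"
  proof -
    have c: "real (card {m\<in>{0..n}. S (xs!m)}) = (\<Sum>m=0..n. h (xs!m))" for xs
      using card_sum[of "{0..n}" "\<lambda>m. S (xs!m)"] by (simp add: h_def)
    show ?thesis by (simp only: c sum_divide_distrib sum_distrib_left times_divide_eq_right)
  qed
  also have "(\<Sum>xs\<in>LL d (Suc n). \<Sum>m=0..n. pathprob P \<pi> xs * h (xs!m))
      = (\<Sum>m=0..n. \<Sum>xs\<in>LL d (Suc n). pathprob P \<pi> xs * h (xs!m))"
    by (rule sum.swap)
  also have "\<dots> = (\<Sum>r=0..n. \<Sum>x\<in>{1..d}. \<pi> x * (\<Sum>u\<in>{1..d}. mpow d P r x u * h u * (\<Sum>t\<in>{1..d}. mpow d P (n-r) u t)))"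
  proof (rule sum.cong[OF refl])
    fix m assume m: "m \<in> {0..n}"
    have "(\<Sum>xs\<in>LL d (Suc n). pathprob P \<pi> xs * h (xs!m))
       = (\<Sum>x\<in>{1..d}. \<Sum>ys\<in>LL d n. pathprob P \<pi> (x#ys) * h ((x#ys)!m))"
      by (rule sum_lists_Suc) simp
    also have "\<dots> = (\<Sum>x\<in>{1..d}. \<pi> x * (\<Sum>ys\<in>LL d n. ch P (x#ys) n * h ((x#ys)!m)))"
      by (intro sum.cong refl) (auto simp: pathprob_Cons sum_distrib_left mult.assoc)
    also have "\<dots> = (\<Sum>x\<in>{1..d}. \<pi> x * (\<Sum>u\<in>{1..d}. mpow d P m x u * h u * (\<Sum>t\<in>{1..d}. mpow d P (n-m) u t)))"
      using m by (intro sum.cong refl) (use C2 in auto)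
    finally show "(\<Sum>xs\<in>LL d (Suc n). pathprob P \<pi> xs * h (xs!m))
       = (\<Sum>x\<in>{1..d}. \<pi> x * (\<Sum>u\<in>{1..d}. mpow d P m x u * h u * (\<Sum>t\<in>{1..d}. mpow d P (n-m) u t)))" .
  qed
  finally show ?thesis by (simp add: TT_eq h_def)
qed

lemma den_markov:
  "(\<Sum>xs\<in>{xs\<in>trajectories d n. Tgt n xs}. pathprob P \<pi> xs)
   = (\<Sum>x\<in>{1..d}. \<pi> x * (\<Sum>t\<in>{1..d}. mpow d P n x t))"
proof -
  have "(\<Sum>xs\<in>LL d (Suc n). pathprob P \<pi> xs) = (\<Sum>x\<in>{1..d}. \<Sum>ys\<in>LL d n. pathprob P \<pi> (x#ys))"
    by (rule sum_lists_Suc) simp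
  also have "\<dots> = (\<Sum>x\<in>{1..d}. \<pi> x * (\<Sum>ys\<in>LL d n. ch P (x#ys) n))"
    by (intro sum.cong refl) (auto simp: pathprob_Cons sum_distrib_left)
  also have "\<dots> = (\<Sum>x\<in>{1..d}. \<pi> x * (\<Sum>t\<in>{1..d}. mpow d P n x t))"
    by (intro sum.cong refl) (use C1 in auto)
  finally show ?thesis by (simp add: TT_eq)
qed

locale frob =
  fixes d :: nat and P :: rmat and ds :: "nat list"
  assumes dsd: "sum_list ds = d"
    and tri: "\<forall>i\<in>{1..length ds}. \<forall>j\<in>{1..length ds}. j > i \<longrightarrow> (\<forall>s\<in>Iset ds i. \<forall>t\<in>Iset ds j. P s t = 0)"
begin

abbreviation "PS \<equiv> Paths P ds"

lemma blk_tri: assumes "i \<in> {1..length ds}" "j \<in> {1..length ds}" "i < j" shows "blk P ds i j = zmat"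
proof -
  have "\<forall>s\<in>Iset ds i. \<forall>t\<in>Iset ds j. P s t = 0" using tri assms by blast
  then show ?thesis by (auto simp: blk_def zmat_def fun_eq_iff)
qed

lemma block_of: assumes "s \<in> {1..d}" obtains i where "i \<in> {1..length ds}" "s \<in> Iset ds i"
  using Iset_ex[of s ds] assms dsd by auto

lemma QG_step:
  assumes "\<theta> \<in> PS"
  shows "QG d P ds \<theta> (Suc m) s t = mmul d (blk P ds (hd \<theta>) (hd \<theta>)) (QG d P ds \<theta> m) s t
     + (if length \<theta> \<ge> 2 then mmul d (blk P ds (hd \<theta>) (hd (tl \<theta>))) (QG d P ds (tl \<theta>) m) s t else 0)"
proof -
  have a: "adm P ds \<theta>" using assms by (simp add: Paths_adm)
  show ?thesis
  proof (cases \<theta>)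
    case Nil then show ?thesis using a by simp
  next
    case (Cons a r)
    show ?thesis
    proof (cases r)
      case Nil then show ?thesis using Cons by (simp add: QG_single)
    next
      case (Cons b r')
      have "a \<le> length ds" using a \<open>\<theta> = a # r\<close> Cons by auto
      then show ?thesis using \<open>\<theta> = a # r\<close> Cons QG_rec[OF _ dsd] by simp
    qed
  qed
qed

lemma K: "s \<in> {1..d} \<Longrightarrow> t \<in> {1..d} \<Longrightarrow> (\<Sum>\<theta>\<in>PS. QG d P ds \<theta> m s t) = mpow d P m s t"
proof (induction m arbitrary: s t)
  case 0
  obtain i where i: "i \<in> {1..length ds}" "s \<in> Iset ds i" using block_of[OF 0(1)] .
  have "(\<Sum>\<theta>\<in>PS. QG d P ds \<theta> 0 s t) = (\<Sum>\<theta>\<in>PS. if length \<theta> = 1 then blkId ds (hd \<theta>) s t else 0)"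
  proof (intro sum.cong refl)
    fix \<theta> assume "\<theta> \<in> PS"
    hence "\<theta> \<noteq> []" by (auto simp: Paths_adm)
    then show "QG d P ds \<theta> 0 s t = (if length \<theta> = 1 then blkId ds (hd \<theta>) s t else 0)"
      by (simp add: QG_0 zmat_def)
  qed
  also have "\<dots> = (\<Sum>\<theta>\<in>{\<theta>\<in>PS. length \<theta> = 1}. blkId ds (hd \<theta>) s t)"
    by (rule sum.inter_filter[symmetric]) (rule finite_Paths)
  also have "{\<theta>\<in>PS. length \<theta> = 1} = (\<lambda>a. [a]) ` {1..length ds}"
    by (auto simp: Paths_adm length_Suc_conv)
  also have "(\<Sum>\<theta>\<in>(\<lambda>a. [a]) ` {1..length ds}. blkId ds (hd \<theta>) s t) = (\<Sum>a\<in>{1..length ds}. blkId ds a s t)"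
    by (subst sum.reindex) (auto simp: inj_on_def)
  also have "\<dots> = (\<Sum>a\<in>{1..length ds}. if a = i then (if s = t then 1 else 0) else 0)"
    using i by (intro sum.cong refl) (auto simp: blkId_def dest: Iset_disj)
  also have "\<dots> = (if s = t then 1 else 0)" using i by simp
  finally show ?case by simp
next
  case (Suc m)
  obtain i where i: "i \<in> {1..length ds}" "s \<in> Iset ds i" using block_of[OF Suc(2)] .
  define X where "X \<theta> = mmul d (blk P ds i (hd \<theta>)) (QG d P ds \<theta> m) s t" for \<theta>
  have ne: "\<theta> \<in> PS \<Longrightarrow> \<theta> \<noteq> []" for \<theta> by (auto simp: Paths_adm)
  have "mpow d P (Suc m) s t = (\<Sum>u\<in>{1..d}. P s u * (\<Sum>\<theta>\<in>PS. QG d P ds \<theta> m u t))"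
    using Suc by (simp add: mmul_def)
  also have "\<dots> = (\<Sum>\<theta>\<in>PS. \<Sum>u\<in>{1..d}. P s u * QG d P ds \<theta> m u t)"
    by (simp add: sum_distrib_left) (rule sum.swap)
  also have "\<dots> = (\<Sum>\<theta>\<in>PS. X \<theta>)"
    unfolding X_def mmul_def
  proof (intro sum.cong refl)
    fix \<theta> u assume "\<theta> \<in> PS"
    show "P s u * QG d P ds \<theta> m u t = blk P ds i (hd \<theta>) s u * QG d P ds \<theta> m u t"
      using supp_QG_row[OF ne[OF \<open>\<theta> \<in> PS\<close>], of d P ds m u t] i by (auto simp: blk_def)
  qed
  also have "\<dots> = (\<Sum>\<theta>\<in>PS. if hd \<theta> = i then X \<theta> else 0) + (\<Sum>\<theta>\<in>PS. if hd \<theta> \<noteq> i then X \<theta> else 0)"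
    by (subst sum.distrib[symmetric]) (intro sum.cong refl, auto)
  finally have R: "mpow d P (Suc m) s t = (\<Sum>\<theta>\<in>PS. if hd \<theta> = i then X \<theta> else 0) + (\<Sum>\<theta>\<in>PS. if hd \<theta> \<noteq> i then X \<theta> else 0)" .
  have "(\<Sum>\<theta>\<in>PS. QG d P ds \<theta> (Suc m) s t) = (\<Sum>\<theta>\<in>PS. (if hd \<theta> = i then X \<theta> else 0)
       + (if hd \<theta> = i \<and> length \<theta> \<ge> 2 then X (tl \<theta>) else 0))"
  proof (intro sum.cong refl)
    fix \<theta> assume th: "\<theta> \<in> PS"
    show "QG d P ds \<theta> (Suc m) s t = (if hd \<theta> = i then X \<theta> else 0)
       + (if hd \<theta> = i \<and> length \<theta> \<ge> 2 then X (tl \<theta>) else 0)"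
      unfolding QG_step[OF th] X_def using i(2)
      by (auto simp: mmul_blk_other)
  qed
  also have "\<dots> = (\<Sum>\<theta>\<in>PS. if hd \<theta> = i then X \<theta> else 0) + (\<Sum>\<theta>\<in>PS. if hd \<theta> = i \<and> length \<theta> \<ge> 2 then X (tl \<theta>) else 0)"
    by (rule sum.distrib)
  finally have L: "(\<Sum>\<theta>\<in>PS. QG d P ds \<theta> (Suc m) s t) = (\<Sum>\<theta>\<in>PS. if hd \<theta> = i then X \<theta> else 0) + (\<Sum>\<theta>\<in>PS. if hd \<theta> = i \<and> length \<theta> \<ge> 2 then X (tl \<theta>) else 0)" .
  define C where "C = {\<theta>\<in>PS. hd \<theta> < i \<and> blk P ds i (hd \<theta>) \<noteq> zmat}"
  define D where "D = {\<theta>\<in>PS. hd \<theta> = i \<and> length \<theta> \<ge> 2}"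
  have "(\<Sum>\<theta>\<in>PS. if hd \<theta> \<noteq> i then X \<theta> else 0) = (\<Sum>\<theta>\<in>PS. if \<theta> \<in> C then X \<theta> else 0)"
  proof (intro sum.cong refl)
    fix \<theta> assume th: "\<theta> \<in> PS"
    have hr: "hd \<theta> \<in> {1..length ds}" using th adm_set[of P ds \<theta>] hd_in_set[OF ne[OF th]] by (auto simp: Paths_adm)
    show "(if hd \<theta> \<noteq> i then X \<theta> else 0) = (if \<theta> \<in> C then X \<theta> else 0)"
    proof (cases "hd \<theta> < i \<and> blk P ds i (hd \<theta>) \<noteq> zmat")
      case True then show ?thesis using th by (auto simp: C_def)
    next
      case False
      hence "hd \<theta> = i \<or> blk P ds i (hd \<theta>) = zmat" using blk_tri[OF i(1) hr] by force
      then show ?thesis using th by (auto simp: C_def X_def) (simp_all add: zmat_def)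
    qed
  qed
  also have "\<dots> = (\<Sum>\<theta>\<in>C. X \<theta>)"
    unfolding C_def by (subst sum.inter_filter[OF finite_Paths]) (intro sum.cong refl, auto)
  also have "\<dots> = (\<Sum>\<theta>\<in>D. X (tl \<theta>))"
  proof (rule sum.reindex_bij_witness[where i=tl and j="Cons i"])
    fix \<theta> assume "\<theta> \<in> C"
    then obtain b r where th: "\<theta> = b # r" "adm P ds \<theta>" "b < i" "blk P ds i b \<noteq> zmat"
      by (cases \<theta>) (auto simp: C_def Paths_adm)
    show "tl (i # \<theta>) = \<theta>" by simp
    show "i # \<theta> \<in> D" using th i(1) by (auto simp: D_def Paths_adm)
    show "X (tl (i # \<theta>)) = X \<theta>" by simp
  next
    fix \<theta> assume "\<theta> \<in> D"
    hence h: "adm P ds \<theta>" "hd \<theta> = i" "length \<theta> \<ge> 2" by (auto simp: D_def Paths_adm)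
    obtain x b r where "\<theta> = x # b # r" using h(3) by (cases \<theta>; cases "tl \<theta>") auto
    hence th: "\<theta> = i # b # r" "adm P ds \<theta>" using h by auto
    show "i # tl \<theta> = \<theta>" using th by simp
    show "tl \<theta> \<in> C" using th by (auto simp: C_def Paths_adm)
  qed
  also have "\<dots> = (\<Sum>\<theta>\<in>PS. if hd \<theta> = i \<and> length \<theta> \<ge> 2 then X (tl \<theta>) else 0)"
    unfolding D_def by (rule sum.inter_filter) (rule finite_Paths)
  finally show ?case using L R by simp
qed

lemma KL:
  assumes l: "l \<in> {1..length ds}" and st: "s \<in> {1..d}" "t \<in> {1..d}" and u: "u \<in> Iset ds l"
  shows "(\<Sum>\<theta>\<in>Paths_through P ds l. QG d P ds (lowpart \<theta> l) r s u * QG d P ds (uppart \<theta> l) r' u t)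
     = mpow d P r s u * mpow d P r' u t"
proof -
  have ud: "u \<in> {1..d}" using Iset_sub[of l ds] l u dsd by auto
  define A where "A = {\<alpha>\<in>PS. last \<alpha> = l}"
  define B where "B = {\<beta>\<in>PS. hd \<beta> = l}"
  have "(\<Sum>\<theta>\<in>Paths_through P ds l. QG d P ds (lowpart \<theta> l) r s u * QG d P ds (uppart \<theta> l) r' u t)
      = (\<Sum>\<alpha>\<in>A. \<Sum>\<beta>\<in>B. QG d P ds \<alpha> r s u * QG d P ds \<beta> r' u t)"
    unfolding A_def B_def by (rule sum_PT[where F="\<lambda>\<alpha> \<beta>. QG d P ds \<alpha> r s u * QG d P ds \<beta> r' u t"])
  also have "\<dots> = (\<Sum>\<alpha>\<in>A. QG d P ds \<alpha> r s u) * (\<Sum>\<beta>\<in>B. QG d P ds \<beta> r' u t)"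
    by (simp add: sum_product)
  also have "(\<Sum>\<alpha>\<in>A. QG d P ds \<alpha> r s u) = (\<Sum>\<alpha>\<in>PS. QG d P ds \<alpha> r s u)"
  proof (rule sum.mono_neutral_left[OF finite_Paths])
    show "A \<subseteq> PS" by (auto simp: A_def)
    show "\<forall>\<alpha>\<in>PS - A. QG d P ds \<alpha> r s u = 0"
    proof (rule ballI, rule ccontr)
      fix \<alpha> assume a: "\<alpha> \<in> PS - A" "QG d P ds \<alpha> r s u \<noteq> 0"
      hence "\<alpha> \<noteq> []" by (auto simp: Paths_adm)
      hence "u \<in> Iset ds (last \<alpha>)" using supp_QG_col a(2) by blast
      hence "last \<alpha> = l" using u Iset_disj by blast
      with a(1) show False by (auto simp: A_def)
    qed
  qed
  also have "(\<Sum>\<beta>\<in>B. QG d P ds \<beta> r' u t) = (\<Sum>\<beta>\<in>PS. QG d P ds \<beta> r' u t)"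
  proof (rule sum.mono_neutral_left[OF finite_Paths])
    show "B \<subseteq> PS" by (auto simp: B_def)
    show "\<forall>\<beta>\<in>PS - B. QG d P ds \<beta> r' u t = 0"
    proof (rule ballI, rule ccontr)
      fix \<beta> assume a: "\<beta> \<in> PS - B" "QG d P ds \<beta> r' u t \<noteq> 0"
      hence "\<beta> \<noteq> []" by (auto simp: Paths_adm)
      hence "u \<in> Iset ds (hd \<beta>)" using supp_QG_row a(2) by blast
      hence "hd \<beta> = l" using u Iset_disj by blast
      with a(1) show False by (auto simp: B_def)
    qed
  qed
  finally show ?thesis using K[OF st(1) ud] K[OF ud st(2)] by simp
qed

lemma PT_sub: "Paths_through P ds l \<subseteq> PS" by (auto simp: Paths_through_def)
lemma finite_PT: "finite (Paths_through P ds l)" using finite_subset[OF PT_sub finite_Paths] .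

lemma PT_hd_last:
  assumes "\<theta> \<in> Paths_through P ds l"
  shows "hd (lowpart \<theta> l) = hd \<theta>" "last (uppart \<theta> l) = last \<theta>" "last (lowpart \<theta> l) = l"
    "hd (uppart \<theta> l) = l" "lowpart \<theta> l \<noteq> []" "uppart \<theta> l \<noteq> []"
proof -
  obtain xs ys where d: "\<theta> = xs @ l # ys" "lowpart \<theta> l = xs @ [l]" "uppart \<theta> l = l # ys"
    using PT_decomp[OF assms] by metis
  show "hd (lowpart \<theta> l) = hd \<theta>" using d by (cases xs) auto
  show "last (uppart \<theta> l) = last \<theta>" using d by simp
  show "last (lowpart \<theta> l) = l" "hd (uppart \<theta> l) = l" "lowpart \<theta> l \<noteq> []" "uppart \<theta> l \<noteq> []"
    using d by auto
qed

lemma PT_ne: "\<theta> \<in> Paths_through P ds l \<Longrightarrow> \<theta> \<noteq> []"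
  by (auto simp: Paths_through_def Paths_adm)

lemma num_general:
  fixes G :: "nat list \<Rightarrow> nat \<Rightarrow> rmat" and \<pi> :: "nat \<Rightarrow> real" and X :: "nat list set"
  assumes X: "finite X" "\<And>\<theta>. \<theta> \<in> X \<Longrightarrow> hd \<theta> \<le> length ds \<and> last \<theta> \<le> length ds"
    and supp: "\<And>\<theta> r s t. \<theta> \<in> X \<Longrightarrow> G \<theta> r s t \<noteq> 0 \<Longrightarrow> s \<in> Iset ds (hd \<theta>) \<and> t \<in> Iset ds (last \<theta>)"
  shows "(\<Sum>\<theta>\<in>X. \<Sum>r=0..n. \<Sum>s\<in>Iset ds (hd \<theta>). \<Sum>t\<in>Iset ds (last \<theta>). \<pi> s * G \<theta> r s t)
       = (\<Sum>r=0..n. \<Sum>s\<in>{1..d}. \<Sum>t\<in>{1..d}. \<pi> s * (\<Sum>\<theta>\<in>X. G \<theta> r s t))"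
proof -
  have "(\<Sum>\<theta>\<in>X. \<Sum>r=0..n. \<Sum>s\<in>Iset ds (hd \<theta>). \<Sum>t\<in>Iset ds (last \<theta>). \<pi> s * G \<theta> r s t)
      = (\<Sum>\<theta>\<in>X. \<Sum>r=0..n. \<Sum>s\<in>{1..d}. \<Sum>t\<in>{1..d}. \<pi> s * G \<theta> r s t)"
  proof (rule sum.cong[OF refl])
    fix \<theta> assume th: "\<theta> \<in> X"
    show "(\<Sum>r=0..n. \<Sum>s\<in>Iset ds (hd \<theta>). \<Sum>t\<in>Iset ds (last \<theta>). \<pi> s * G \<theta> r s t) = (\<Sum>r=0..n. \<Sum>s\<in>{1..d}. \<Sum>t\<in>{1..d}. \<pi> s * G \<theta> r s t)"
    proof (rule sum.cong[OF refl])
    fix r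
    have s1: "Iset ds (hd \<theta>) \<subseteq> {1..d}" "Iset ds (last \<theta>) \<subseteq> {1..d}"
      using Iset_sub X(2)[OF th] dsd by auto
    have "(\<Sum>s\<in>Iset ds (hd \<theta>). \<Sum>t\<in>Iset ds (last \<theta>). \<pi> s * G \<theta> r s t)
        = (\<Sum>s\<in>Iset ds (hd \<theta>). \<Sum>t\<in>{1..d}. \<pi> s * G \<theta> r s t)"
    proof (rule sum.cong[OF refl])
      fix s
      show "(\<Sum>t\<in>Iset ds (last \<theta>). \<pi> s * G \<theta> r s t) = (\<Sum>t\<in>{1..d}. \<pi> s * G \<theta> r s t)"
        by (rule sum.mono_neutral_left) (use s1 supp[OF th, of r s] in auto)
    qed
    also have "\<dots> = (\<Sum>s\<in>{1..d}. \<Sum>t\<in>{1..d}. \<pi> s * G \<theta> r s t)"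
    proof (rule sum.mono_neutral_left)
      show "\<forall>s\<in>{1..d} - Iset ds (hd \<theta>). (\<Sum>t\<in>{1..d}. \<pi> s * G \<theta> r s t) = 0"
      proof
        fix s assume "s \<in> {1..d} - Iset ds (hd \<theta>)"
        then show "(\<Sum>t\<in>{1..d}. \<pi> s * G \<theta> r s t) = 0"
          using supp[OF th, of r s] by (intro sum.neutral) auto
      qed
    qed (use s1 in auto)
    finally show "(\<Sum>s\<in>Iset ds (hd \<theta>). \<Sum>t\<in>Iset ds (last \<theta>). \<pi> s * G \<theta> r s t)
        = (\<Sum>s\<in>{1..d}. \<Sum>t\<in>{1..d}. \<pi> s * G \<theta> r s t)" .
  qed
  qed
  also have "\<dots> = (\<Sum>r=0..n. \<Sum>\<theta>\<in>X. \<Sum>s\<in>{1..d}. \<Sum>t\<in>{1..d}. \<pi> s * G \<theta> r s t)"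
    by (rule sum.swap)
  also have "\<dots> = (\<Sum>r=0..n. \<Sum>s\<in>{1..d}. \<Sum>t\<in>{1..d}. \<pi> s * (\<Sum>\<theta>\<in>X. G \<theta> r s t))"
  proof (intro sum.cong refl)
    fix r
    have "(\<Sum>\<theta>\<in>X. \<Sum>s\<in>{1..d}. \<Sum>t\<in>{1..d}. \<pi> s * G \<theta> r s t)
        = (\<Sum>s\<in>{1..d}. \<Sum>\<theta>\<in>X. \<Sum>t\<in>{1..d}. \<pi> s * G \<theta> r s t)" by (rule sum.swap)
    also have "\<dots> = (\<Sum>s\<in>{1..d}. \<Sum>t\<in>{1..d}. \<Sum>\<theta>\<in>X. \<pi> s * G \<theta> r s t)"
      by (rule sum.cong[OF refl]) (rule sum.swap)
    finally show "(\<Sum>\<theta>\<in>X. \<Sum>s\<in>{1..d}. \<Sum>t\<in>{1..d}. \<pi> s * G \<theta> r s t)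
        = (\<Sum>s\<in>{1..d}. \<Sum>t\<in>{1..d}. \<pi> s * (\<Sum>\<theta>\<in>X. G \<theta> r s t))"
      by (simp add: sum_distrib_left)
  qed
  finally show ?thesis .
qed

lemma PT_bounds: "\<theta> \<in> Paths_through P ds l \<Longrightarrow> hd \<theta> \<le> length ds \<and> last \<theta> \<le> length ds"
proof -
  assume th: "\<theta> \<in> Paths_through P ds l"
  have a: "adm P ds \<theta>" and ne: "\<theta> \<noteq> []" using th by (auto simp: Paths_through_def Paths_adm)
  have "hd \<theta> \<in> {1..length ds}" "last \<theta> \<in> {1..length ds}"
    using adm_set[OF a] hd_in_set[OF ne] last_in_set[OF ne] by blast+
  then show ?thesis by simp
qed

lemma PS_bounds: "\<theta> \<in> PS \<Longrightarrow> hd \<theta> \<le> length ds \<and> last \<theta> \<le> length ds"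
proof -
  assume th: "\<theta> \<in> PS"
  have a: "adm P ds \<theta>" and ne: "\<theta> \<noteq> []" using th by (auto simp: Paths_adm)
  have "hd \<theta> \<in> {1..length ds}" "last \<theta> \<in> {1..length ds}"
    using adm_set[OF a] hd_in_set[OF ne] last_in_set[OF ne] by blast+
  then show ?thesis by simp
qed

lemma rhs_num_i:
  assumes l: "l \<in> {1..length ds}"
  shows "(\<Sum>\<theta>\<in>Paths_through P ds l. \<Sum>r=0..n. \<Sum>s\<in>Iset ds (hd \<theta>). \<Sum>t\<in>Iset ds (last \<theta>).
            \<pi> s * mmul d (Qpath d P ds (lowpart \<theta> l) r) (Qpath d P ds (uppart \<theta> l) (n - r)) s t)
   = (\<Sum>r=0..n. \<Sum>x\<in>{1..d}. \<pi> x * (\<Sum>u\<in>{1..d}. mpow d P r x u * (if u \<in> Iset ds l then 1 else 0) * (\<Sum>t\<in>{1..d}. mpow d P (n-r) u t)))"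
proof -
  define G where "G \<theta> r = mmul d (Qpath d P ds (lowpart \<theta> l) r) (Qpath d P ds (uppart \<theta> l) (n - r))" for \<theta> r
  have GQ: "G \<theta> r = mmul d (QG d P ds (lowpart \<theta> l) r) (QG d P ds (uppart \<theta> l) (n - r))"
    if "\<theta> \<in> Paths_through P ds l" for \<theta> r
    using PT_hd_last[OF that] by (simp add: G_def Qpath_QG)
  have "(\<Sum>\<theta>\<in>Paths_through P ds l. \<Sum>r=0..n. \<Sum>s\<in>Iset ds (hd \<theta>). \<Sum>t\<in>Iset ds (last \<theta>). \<pi> s * G \<theta> r s t)
      = (\<Sum>r=0..n. \<Sum>s\<in>{1..d}. \<Sum>t\<in>{1..d}. \<pi> s * (\<Sum>\<theta>\<in>Paths_through P ds l. G \<theta> r s t))"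
  proof (rule num_general[OF finite_PT PT_bounds])
    fix \<theta> r s t assume th: "\<theta> \<in> Paths_through P ds l" and nz: "G \<theta> r s t \<noteq> 0"
    obtain v where v: "QG d P ds (lowpart \<theta> l) r s v \<noteq> 0" "QG d P ds (uppart \<theta> l) (n - r) v t \<noteq> 0"
      using mmul_nz[OF nz[unfolded GQ[OF th]]] by blast
    show "s \<in> Iset ds (hd \<theta>) \<and> t \<in> Iset ds (last \<theta>)"
      using supp_QG_row[OF _ v(1)] supp_QG_col[OF _ v(2)] PT_hd_last[OF th] by simp
  qed
  also have "\<dots> = (\<Sum>r=0..n. \<Sum>x\<in>{1..d}. \<pi> x * (\<Sum>u\<in>{1..d}. mpow d P r x u * (if u \<in> Iset ds l then 1 else 0) * (\<Sum>t\<in>{1..d}. mpow d P (n-r) u t)))"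
  proof (rule sum.cong[OF refl], rule sum.cong[OF refl])
    fix r s assume s: "s \<in> {1..d}"
    have inner: "(\<Sum>\<theta>\<in>Paths_through P ds l. G \<theta> r s t) = (\<Sum>u\<in>{1..d}. if u \<in> Iset ds l then mpow d P r s u * mpow d P (n-r) u t else 0)"
      if t: "t \<in> {1..d}" for t
    proof -
      have "(\<Sum>\<theta>\<in>Paths_through P ds l. G \<theta> r s t)
          = (\<Sum>\<theta>\<in>Paths_through P ds l. \<Sum>u\<in>{1..d}. QG d P ds (lowpart \<theta> l) r s u * QG d P ds (uppart \<theta> l) (n - r) u t)"
        by (intro sum.cong refl) (simp add: GQ mmul_def)
      also have "\<dots> = (\<Sum>u\<in>{1..d}. \<Sum>\<theta>\<in>Paths_through P ds l. QG d P ds (lowpart \<theta> l) r s u * QG d P ds (uppart \<theta> l) (n - r) u t)"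
        by (rule sum.swap)
      also have "\<dots> = (\<Sum>u\<in>{1..d}. if u \<in> Iset ds l then mpow d P r s u * mpow d P (n-r) u t else 0)"
      proof (rule sum.cong[OF refl])
        fix u assume u: "u \<in> {1..d}"
        show "(\<Sum>\<theta>\<in>Paths_through P ds l. QG d P ds (lowpart \<theta> l) r s u * QG d P ds (uppart \<theta> l) (n - r) u t)
           = (if u \<in> Iset ds l then mpow d P r s u * mpow d P (n-r) u t else 0)"
        proof (cases "u \<in> Iset ds l")
          case True then show ?thesis using KL[OF l s t True] by simp
        next
          case False
          have "QG d P ds (lowpart \<theta> l) r s u = 0" if th: "\<theta> \<in> Paths_through P ds l" for \<theta>
            using supp_QG_col[of "lowpart \<theta> l" d P ds r s u] PT_hd_last[OF th] False by auto
          then show ?thesis using False by simp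
        qed
      qed
      finally show ?thesis .
    qed
    have "(\<Sum>t\<in>{1..d}. \<pi> s * (\<Sum>\<theta>\<in>Paths_through P ds l. G \<theta> r s t))
        = (\<Sum>t\<in>{1..d}. \<pi> s * (\<Sum>u\<in>{1..d}. if u \<in> Iset ds l then mpow d P r s u * mpow d P (n-r) u t else 0))"
      using inner by simp
    also have "\<dots> = \<pi> s * (\<Sum>t\<in>{1..d}. \<Sum>u\<in>{1..d}. if u \<in> Iset ds l then mpow d P r s u * mpow d P (n-r) u t else 0)"
      by (simp add: sum_distrib_left)
    also have "(\<Sum>t\<in>{1..d}. \<Sum>u\<in>{1..d}. if u \<in> Iset ds l then mpow d P r s u * mpow d P (n-r) u t else 0)
        = (\<Sum>u\<in>{1..d}. \<Sum>t\<in>{1..d}. if u \<in> Iset ds l then mpow d P r s u * mpow d P (n-r) u t else 0)"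
      by (rule sum.swap)
    also have "\<dots> = (\<Sum>u\<in>{1..d}. mpow d P r s u * (if u \<in> Iset ds l then 1 else 0) * (\<Sum>t\<in>{1..d}. mpow d P (n-r) u t))"
      by (intro sum.cong refl) (simp add: sum_distrib_left)
    finally show "(\<Sum>t\<in>{1..d}. \<pi> s * (\<Sum>\<theta>\<in>Paths_through P ds l. G \<theta> r s t))
        = \<pi> s * (\<Sum>u\<in>{1..d}. mpow d P r s u * (if u \<in> Iset ds l then 1 else 0) * (\<Sum>t\<in>{1..d}. mpow d P (n-r) u t))" .
  qed
  finally show ?thesis by (simp add: G_def)
qed

lemma E_lemma:
  assumes "s0 \<in> {1..d}"
  shows "mmul d (mmul d A (\<lambda>i j. if i = s0 \<and> j = s0 then 1 else 0)) B s t = A s s0 * B s0 t"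
proof -
  have "mmul d A (\<lambda>i j. if i = s0 \<and> j = s0 then 1 else 0) s j = (if j = s0 then A s s0 else 0)" for j
  proof -
    have "mmul d A (\<lambda>i j. if i = s0 \<and> j = s0 then 1 else 0) s j = (\<Sum>l\<in>{1..d}. if l = s0 then (if j = s0 then A s s0 else 0) else 0)"
      unfolding mmul_def by (intro sum.cong refl) auto
    also have "\<dots> = (if j = s0 then A s s0 else 0)" using assms by (simp add: sum.delta)
    finally show ?thesis .
  qed
  then have "mmul d (mmul d A (\<lambda>i j. if i = s0 \<and> j = s0 then 1 else 0)) B s t = (\<Sum>j\<in>{1..d}. if j = s0 then A s s0 * B s0 t else 0)"
    unfolding mmul_def[of d _ B] by (intro sum.cong refl) auto
  also have "\<dots> = A s s0 * B s0 t" using assms by (simp add: sum.delta)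
  finally show ?thesis .
qed

lemma rhs_num_ii:
  assumes l: "l \<in> {1..length ds}" and s0: "s0 \<in> Iset ds l"
  shows "(\<Sum>\<theta>\<in>Paths_through P ds l. \<Sum>r=0..n. \<Sum>s\<in>Iset ds (hd \<theta>). \<Sum>t\<in>Iset ds (last \<theta>).
            \<pi> s * mmul d (mmul d (Qpath d P ds (lowpart \<theta> l) r) (\<lambda>i j. if i = s0 \<and> j = s0 then 1 else 0))
                          (Qpath d P ds (uppart \<theta> l) (n - r)) s t)
   = (\<Sum>r=0..n. \<Sum>x\<in>{1..d}. \<pi> x * (\<Sum>u\<in>{1..d}. mpow d P r x u * (if u = s0 then 1 else 0) * (\<Sum>t\<in>{1..d}. mpow d P (n-r) u t)))"
proof -
  have s0d: "s0 \<in> {1..d}" using Iset_sub[of l ds] l s0 dsd by auto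
  define G where "G \<theta> r = mmul d (mmul d (Qpath d P ds (lowpart \<theta> l) r) (\<lambda>i j. if i = s0 \<and> j = s0 then 1 else 0))
                          (Qpath d P ds (uppart \<theta> l) (n - r))" for \<theta> r
  have GQ: "G \<theta> r s t = QG d P ds (lowpart \<theta> l) r s s0 * QG d P ds (uppart \<theta> l) (n - r) s0 t"
    if "\<theta> \<in> Paths_through P ds l" for \<theta> r s t
    using PT_hd_last[OF that] by (simp add: G_def Qpath_QG E_lemma[OF s0d])
  have "(\<Sum>\<theta>\<in>Paths_through P ds l. \<Sum>r=0..n. \<Sum>s\<in>Iset ds (hd \<theta>). \<Sum>t\<in>Iset ds (last \<theta>). \<pi> s * G \<theta> r s t)
      = (\<Sum>r=0..n. \<Sum>s\<in>{1..d}. \<Sum>t\<in>{1..d}. \<pi> s * (\<Sum>\<theta>\<in>Paths_through P ds l. G \<theta> r s t))"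
  proof (rule num_general[OF finite_PT PT_bounds])
    fix \<theta> r s t assume th: "\<theta> \<in> Paths_through P ds l" and nz: "G \<theta> r s t \<noteq> 0"
    have v: "QG d P ds (lowpart \<theta> l) r s s0 \<noteq> 0" "QG d P ds (uppart \<theta> l) (n - r) s0 t \<noteq> 0"
      using nz unfolding GQ[OF th] by auto
    show "s \<in> Iset ds (hd \<theta>) \<and> t \<in> Iset ds (last \<theta>)"
      using supp_QG_row[OF _ v(1)] supp_QG_col[OF _ v(2)] PT_hd_last[OF th] by simp
  qed
  also have "\<dots> = (\<Sum>r=0..n. \<Sum>x\<in>{1..d}. \<pi> x * (\<Sum>u\<in>{1..d}. mpow d P r x u * (if u = s0 then 1 else 0) * (\<Sum>t\<in>{1..d}. mpow d P (n-r) u t)))"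
  proof (rule sum.cong[OF refl], rule sum.cong[OF refl])
    fix r s assume s: "s \<in> {1..d}"
    have "(\<Sum>t\<in>{1..d}. \<pi> s * (\<Sum>\<theta>\<in>Paths_through P ds l. G \<theta> r s t))
        = (\<Sum>t\<in>{1..d}. \<pi> s * (mpow d P r s s0 * mpow d P (n-r) s0 t))"
    proof (rule sum.cong[OF refl])
      fix t assume t: "t \<in> {1..d}"
      show "\<pi> s * (\<Sum>\<theta>\<in>Paths_through P ds l. G \<theta> r s t) = \<pi> s * (mpow d P r s s0 * mpow d P (n-r) s0 t)"
      proof -
        have "(\<Sum>\<theta>\<in>Paths_through P ds l. G \<theta> r s t) = (\<Sum>\<theta>\<in>Paths_through P ds l. QG d P ds (lowpart \<theta> l) r s s0 * QG d P ds (uppart \<theta> l) (n - r) s0 t)"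
          by (rule sum.cong[OF refl]) (rule GQ)
        then show ?thesis using KL[OF l s t s0, of r "n-r"] by simp
      qed
    qed
    also have "\<dots> = \<pi> s * (mpow d P r s s0 * (\<Sum>t\<in>{1..d}. mpow d P (n-r) s0 t))"
      by (simp add: sum_distrib_left)
    finally have A: "(\<Sum>t\<in>{1..d}. \<pi> s * (\<Sum>\<theta>\<in>Paths_through P ds l. G \<theta> r s t))
       = \<pi> s * (mpow d P r s s0 * (\<Sum>t\<in>{1..d}. mpow d P (n-r) s0 t))" .
    have "(\<Sum>u\<in>{1..d}. mpow d P r s u * (if u = s0 then 1 else 0) * (\<Sum>t\<in>{1..d}. mpow d P (n-r) u t))
        = (\<Sum>u\<in>{1..d}. if u = s0 then mpow d P r s s0 * (\<Sum>t\<in>{1..d}. mpow d P (n-r) s0 t) else 0)"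
      by (intro sum.cong refl) auto
    also have "\<dots> = mpow d P r s s0 * (\<Sum>t\<in>{1..d}. mpow d P (n-r) s0 t)"
      using s0d by (simp add: sum.delta)
    finally show "(\<Sum>t\<in>{1..d}. \<pi> s * (\<Sum>\<theta>\<in>Paths_through P ds l. G \<theta> r s t))
        = \<pi> s * (\<Sum>u\<in>{1..d}. mpow d P r s u * (if u = s0 then 1 else 0) * (\<Sum>t\<in>{1..d}. mpow d P (n-r) u t))"
      using A by simp
  qed
  finally show ?thesis by (simp add: G_def)
qed

lemma rhs_den:
  "(\<Sum>\<theta>\<in>PS. \<Sum>s\<in>Iset ds (hd \<theta>). \<Sum>t\<in>Iset ds (last \<theta>). \<pi> s * Qpath d P ds \<theta> n s t)
   = (\<Sum>x\<in>{1..d}. \<pi> x * (\<Sum>t\<in>{1..d}. mpow d P n x t))"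
proof -
  define G where "G \<theta> (r::nat) = Qpath d P ds \<theta> n" for \<theta> r
  have "(\<Sum>\<theta>\<in>PS. \<Sum>r=0..0. \<Sum>s\<in>Iset ds (hd \<theta>). \<Sum>t\<in>Iset ds (last \<theta>). \<pi> s * G \<theta> r s t)
      = (\<Sum>r=0..0. \<Sum>s\<in>{1..d}. \<Sum>t\<in>{1..d}. \<pi> s * (\<Sum>\<theta>\<in>PS. G \<theta> r s t))"
  proof (rule num_general[OF finite_Paths PS_bounds])
    fix \<theta> r s t assume th: "\<theta> \<in> PS" and nz: "G \<theta> r s t \<noteq> 0"
    have ne: "\<theta> \<noteq> []" using th by (auto simp: Paths_adm)
    have q: "QG d P ds \<theta> n s t \<noteq> 0" using nz Qpath_QG[OF ne] by (simp add: G_def)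
    show "s \<in> Iset ds (hd \<theta>) \<and> t \<in> Iset ds (last \<theta>)"
      using supp_QG_row[OF ne q] supp_QG_col[OF ne q] by simp
  qed
  hence 1: "(\<Sum>\<theta>\<in>PS. \<Sum>s\<in>Iset ds (hd \<theta>). \<Sum>t\<in>Iset ds (last \<theta>). \<pi> s * Qpath d P ds \<theta> n s t)
      = (\<Sum>s\<in>{1..d}. \<Sum>t\<in>{1..d}. \<pi> s * (\<Sum>\<theta>\<in>PS. Qpath d P ds \<theta> n s t))"
    by (simp add: G_def)
  have 2: "(\<Sum>\<theta>\<in>PS. Qpath d P ds \<theta> n s t) = mpow d P n s t" if "s \<in> {1..d}" "t \<in> {1..d}" for s t
  proof -
    have "(\<Sum>\<theta>\<in>PS. Qpath d P ds \<theta> n s t) = (\<Sum>\<theta>\<in>PS. QG d P ds \<theta> n s t)"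
    proof (rule sum.cong[OF refl])
      fix \<theta> assume "\<theta> \<in> PS"
      hence "\<theta> \<noteq> []" by (auto simp: Paths_adm)
      then show "Qpath d P ds \<theta> n s t = QG d P ds \<theta> n s t" by (simp add: Qpath_QG)
    qed
    then show ?thesis using K[OF that] by simp
  qed
  have "(\<Sum>s\<in>{1..d}. \<Sum>t\<in>{1..d}. \<pi> s * (\<Sum>\<theta>\<in>PS. Qpath d P ds \<theta> n s t))
      = (\<Sum>s\<in>{1..d}. \<Sum>t\<in>{1..d}. \<pi> s * mpow d P n s t)"
    by (intro sum.cong refl) (simp add: 2)
  with 1 show ?thesis by (simp add: sum_distrib_left)
qed

end


theorem corollary3p3:
  fixes d :: nat and P :: "nat \<Rightarrow> nat \<Rightarrow> real" and \<pi> :: "nat \<Rightarrow> real"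
    and ds :: "nat list" and l n :: nat
  assumes d2: "d \<ge> 2"
    and P_nonneg: "\<forall>i\<in>{0..d}. \<forall>j\<in>{0..d}. P i j \<ge> 0"
    and P_rows: "\<forall>i\<in>{0..d}. (\<Sum>j\<in>{0..d}. P i j) = 1"
    and P_absorb: "P 0 0 = 1" "\<forall>j\<in>{1..d}. P 0 j = 0"
    and R_nz: "\<exists>i\<in>{1..d}. P i 0 \<noteq> 0"
    and Q_nz: "\<exists>i\<in>{1..d}. \<exists>j\<in>{1..d}. P i j \<noteq> 0"
    and Q_eig: "\<forall>(ev::complex) (v::nat \<Rightarrow> complex).
                  (\<exists>i\<in>{1..d}. v i \<noteq> 0) \<and>
                  (\<forall>i\<in>{1..d}. (\<Sum>j\<in>{1..d}. complex_of_real (P i j) * v j) = ev * v i)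
                  \<longrightarrow> cmod ev < 1"
    and pi_nonneg: "\<forall>s\<in>{1..d}. \<pi> s \<ge> 0"
    and pi_sum: "(\<Sum>s\<in>{1..d}. \<pi> s) = 1"
    and ds_pos: "\<forall>i<length ds. ds ! i > 0"
    and ds_sum: "sum_list ds = d"
    and frob_tri: "\<forall>i\<in>{1..length ds}. \<forall>j\<in>{1..length ds}. j > i \<longrightarrow>
                     (\<forall>s\<in>Iset ds i. \<forall>t\<in>Iset ds j. P s t = 0)"
    and frob_evpos: "\<forall>i\<in>{1..length ds}. \<exists>N. \<forall>m\<ge>N.
                       \<forall>s\<in>Iset ds i. \<forall>t\<in>Iset ds i. bpow d P ds i m s t > 0"
    and l_range: "l \<in> {1..length ds}"
    and n_pos: "n \<ge> 1"
  shows
   "cond_exp d P \<pi> n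
       (\<lambda>xs. card {m\<in>{0..n}. xs ! m \<in> Iset ds l} / (real n + 1))
    = (\<Sum>\<theta>\<in>Paths_through P ds l. \<Sum>r=0..n.
          \<Sum>s\<in>Iset ds (hd \<theta>). \<Sum>t\<in>Iset ds (last \<theta>).
            \<pi> s * mmul d (Qpath d P ds (lowpart \<theta> l) r)
                          (Qpath d P ds (uppart \<theta> l) (n - r)) s t)
      / ((real n + 1) * (\<Sum>\<theta>\<in>Paths P ds.
          \<Sum>s\<in>Iset ds (hd \<theta>). \<Sum>t\<in>Iset ds (last \<theta>). \<pi> s * Qpath d P ds \<theta> n s t))
    \<and>
    (\<forall>s0\<in>Iset ds l.
      cond_exp d P \<pi> n
       (\<lambda>xs. card {m\<in>{0..n}. xs ! m = s0} / (real n + 1))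
      = (\<Sum>\<theta>\<in>Paths_through P ds l. \<Sum>r=0..n.
          \<Sum>s\<in>Iset ds (hd \<theta>). \<Sum>t\<in>Iset ds (last \<theta>).
            \<pi> s * mmul d (mmul d (Qpath d P ds (lowpart \<theta> l) r)
                                   (\<lambda>i j. if i = s0 \<and> j = s0 then 1 else 0))
                          (Qpath d P ds (uppart \<theta> l) (n - r)) s t)
      / ((real n + 1) * (\<Sum>\<theta>\<in>Paths P ds.
          \<Sum>s\<in>Iset ds (hd \<theta>). \<Sum>t\<in>Iset ds (last \<theta>). \<pi> s * Qpath d P ds \<theta> n s t)))"
proof -
  interpret frob d P ds using ds_sum frob_tri by unfold_locales
  define D where "D = (\<Sum>x\<in>{1..d}. \<pi> x * (\<Sum>t\<in>{1..d}. mpow d P n x t))"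
  have den: "(\<Sum>xs\<in>{xs\<in>trajectories d n. Tgt n xs}. pathprob P \<pi> xs) = D"
    by (simp add: den_markov D_def)
  have rden: "(\<Sum>\<theta>\<in>Paths P ds. \<Sum>s\<in>Iset ds (hd \<theta>). \<Sum>t\<in>Iset ds (last \<theta>). \<pi> s * Qpath d P ds \<theta> n s t) = D"
    by (simp add: rhs_den D_def)
  have partI: "cond_exp d P \<pi> n
       (\<lambda>xs. card {m\<in>{0..n}. xs ! m \<in> Iset ds l} / (real n + 1))
    = (\<Sum>\<theta>\<in>Paths_through P ds l. \<Sum>r=0..n.
          \<Sum>s\<in>Iset ds (hd \<theta>). \<Sum>t\<in>Iset ds (last \<theta>).
            \<pi> s * mmul d (Qpath d P ds (lowpart \<theta> l) r)
                          (Qpath d P ds (uppart \<theta> l) (n - r)) s t)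
      / ((real n + 1) * (\<Sum>\<theta>\<in>Paths P ds.
          \<Sum>s\<in>Iset ds (hd \<theta>). \<Sum>t\<in>Iset ds (last \<theta>). \<pi> s * Qpath d P ds \<theta> n s t))"
  proof -
    have nm: "(\<Sum>xs\<in>{xs\<in>trajectories d n. Tgt n xs}. pathprob P \<pi> xs * (real (card {m\<in>{0..n}. xs ! m \<in> Iset ds l}) / (real n + 1)))
      = (\<Sum>r=0..n. \<Sum>x\<in>{1..d}. \<pi> x * (\<Sum>u\<in>{1..d}. mpow d P r x u * (if u \<in> Iset ds l then 1 else 0) * (\<Sum>t\<in>{1..d}. mpow d P (n-r) u t))) / (real n + 1)"
      using num_markov[where d=d and n=n and P=P and \<pi>=\<pi> and S="\<lambda>u. u \<in> Iset ds l"] by simp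
    show ?thesis unfolding cond_exp_def rden rhs_num_i[OF l_range] nm den by simp
  qed
  have partII: "cond_exp d P \<pi> n
       (\<lambda>xs. card {m\<in>{0..n}. xs ! m = s0} / (real n + 1))
      = (\<Sum>\<theta>\<in>Paths_through P ds l. \<Sum>r=0..n.
          \<Sum>s\<in>Iset ds (hd \<theta>). \<Sum>t\<in>Iset ds (last \<theta>).
            \<pi> s * mmul d (mmul d (Qpath d P ds (lowpart \<theta> l) r)
                                   (\<lambda>i j. if i = s0 \<and> j = s0 then 1 else 0))
                          (Qpath d P ds (uppart \<theta> l) (n - r)) s t)
      / ((real n + 1) * (\<Sum>\<theta>\<in>Paths P ds.
          \<Sum>s\<in>Iset ds (hd \<theta>). \<Sum>t\<in>Iset ds (last \<theta>). \<pi> s * Qpath d P ds \<theta> n s t))"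
    if s0: "s0 \<in> Iset ds l" for s0
  proof -
    have nm: "(\<Sum>xs\<in>{xs\<in>trajectories d n. Tgt n xs}. pathprob P \<pi> xs * (real (card {m\<in>{0..n}. xs ! m = s0}) / (real n + 1)))
      = (\<Sum>r=0..n. \<Sum>x\<in>{1..d}. \<pi> x * (\<Sum>u\<in>{1..d}. mpow d P r x u * (if u = s0 then 1 else 0) * (\<Sum>t\<in>{1..d}. mpow d P (n-r) u t))) / (real n + 1)"
      using num_markov[where d=d and n=n and P=P and \<pi>=\<pi> and S="\<lambda>u. u = s0"] by simp
    show ?thesis unfolding cond_exp_def rden rhs_num_ii[OF l_range s0] nm den by simp
  qed
  show ?thesis using partI partII by blast
qed

end
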